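(* Let $(G,L)$ be an instance of the List-$k$-Coloring Problem such that $|L(v)|\neq 1$ for every $v\in V(G)$ and $G$ has no $L$-good $P_3$. If $G$ admits a frugal $L$-coloring $\phi$, then for every vertex $v\in V(G)$, the vertices of $N_{G^L}[v]$ receive pairwise distinct colors under $\phi$; in particular $|N_{G^L}(v)|<k$.
   Context: Graphs are finite and simple; $[k]=\{1,\dots,k\}$. A $k$-list-assignment of $G$ is a map $L:V(G)\to 2^{[k]}$; an instance of the List-$k$-Coloring Problem is a pair $(G,L)$. An $L$-coloring of $G$ is a map $\phi:V(G)\to[k]$ with $\phi(u)\ne\phi(v)$ for every edge $uv$ and $\phi(v)\in L(v)$ for all $v$. An $L$-coloring $\phi$ is frugal if for every $v\in V(G)$ and every $i\in L(v)$, $v$ has at most one neighbour $u$ with $\phi(u)=i$. An induced $P_3$ in $G$, written $x_1-x_2-x_3$, consists of distinct vertices with $x_1x_2,x_2x_3\in E(G)$ and $x_1x_3\notin E(G)$; it is $L$-good if $|L(x_1)|,|L(x_2)|,|L(x_3)|\ge 2$ and $L(x_1)\cap L(x_2)$, $L(x_1)\cap L(x_3)$, $L(x_2)\cap L(x_3)$ are all nonempty. $G^L$ is the graph with vertex set $V(G)$ whose edges are the edges $uv\in E(G)$ with $L(u)\cap L(v)\neq\emptyset$. $N_{G^L}(v)$ is the set of neighbours of $v$ in $G^L$ and $N_{G^L}[v]=N_{G^L}(v)\cup\{v\}$. *)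

theory Defs
  imports Main
begin

definition simple_graph :: "'a set \<Rightarrow> 'a set set \<Rightarrow> bool" where
  "simple_graph V E \<longleftrightarrow> finite V \<and>
     (\<forall>e\<in>E. \<exists>u v. e = {u, v} \<and> u \<noteq> v \<and> u \<in> V \<and> v \<in> V)"

definition list_assignment :: "nat \<Rightarrow> 'a set \<Rightarrow> ('a \<Rightarrow> nat set) \<Rightarrow> bool" where
  "list_assignment k V L \<longleftrightarrow> (\<forall>v\<in>V. L v \<subseteq> {1..k})"

definition L_coloring :: "'a set \<Rightarrow> 'a set set \<Rightarrow> ('a \<Rightarrow> nat set) \<Rightarrow> ('a \<Rightarrow> nat) \<Rightarrow> bool" where
  "L_coloring V E L \<phi> \<longleftrightarrow> (\<forall>v\<in>V. \<phi> v \<in> L v) \<and> (\<forall>u v. {u, v} \<in> E \<longrightarrow> \<phi> u \<noteq> \<phi> v)"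

definition frugal_L_coloring :: "'a set \<Rightarrow> 'a set set \<Rightarrow> ('a \<Rightarrow> nat set) \<Rightarrow> ('a \<Rightarrow> nat) \<Rightarrow> bool" where
  "frugal_L_coloring V E L \<phi> \<longleftrightarrow> L_coloring V E L \<phi> \<and>
     (\<forall>v\<in>V. \<forall>i\<in>L v. card {u\<in>V. {u, v} \<in> E \<and> \<phi> u = i} \<le> 1)"

definition induced_P3 :: "'a set \<Rightarrow> 'a set set \<Rightarrow> 'a \<Rightarrow> 'a \<Rightarrow> 'a \<Rightarrow> bool" where
  "induced_P3 V E x1 x2 x3 \<longleftrightarrow> x1 \<in> V \<and> x2 \<in> V \<and> x3 \<in> V \<and>
     x1 \<noteq> x2 \<and> x2 \<noteq> x3 \<and> x1 \<noteq> x3 \<and>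
     {x1, x2} \<in> E \<and> {x2, x3} \<in> E \<and> {x1, x3} \<notin> E"

definition L_good_P3 :: "'a set \<Rightarrow> 'a set set \<Rightarrow> ('a \<Rightarrow> nat set) \<Rightarrow> 'a \<Rightarrow> 'a \<Rightarrow> 'a \<Rightarrow> bool" where
  "L_good_P3 V E L x1 x2 x3 \<longleftrightarrow> induced_P3 V E x1 x2 x3 \<and>
     card (L x1) \<ge> 2 \<and> card (L x2) \<ge> 2 \<and> card (L x3) \<ge> 2 \<and>
     L x1 \<inter> L x2 \<noteq> {} \<and> L x1 \<inter> L x3 \<noteq> {} \<and> L x2 \<inter> L x3 \<noteq> {}"

definition N_GL :: "'a set \<Rightarrow> 'a set set \<Rightarrow> ('a \<Rightarrow> nat set) \<Rightarrow> 'a \<Rightarrow> 'a set" where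
  "N_GL V E L v = {u\<in>V. {u, v} \<in> E \<and> L u \<inter> L v \<noteq> {}}"

definition N_GL_closed :: "'a set \<Rightarrow> 'a set set \<Rightarrow> ('a \<Rightarrow> nat set) \<Rightarrow> 'a \<Rightarrow> 'a set" where
  "N_GL_closed V E L v = insert v (N_GL V E L v)"

end

theory Submission
  imports Defs
begin

theorem lemma4p1:
  fixes V :: "'a set" and E :: "'a set set" and L :: "'a \<Rightarrow> nat set"
    and k :: nat and \<phi> :: "'a \<Rightarrow> nat"
  assumes "simple_graph V E"
    and "list_assignment k V L"
    and "\<forall>v\<in>V. card (L v) \<noteq> 1"
    and "\<not> (\<exists>x1 x2 x3. L_good_P3 V E L x1 x2 x3)"
    and "frugal_L_coloring V E L \<phi>"
  shows "\<forall>v\<in>V. inj_on \<phi> (N_GL_closed V E L v) \<and> card (N_GL V E L v) < k"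
proof
  fix v assume v: "v \<in> V"
  have finV: "finite V" using assms(1) by (simp add: simple_graph_def)
  have edge: "\<And>a b. {a,b} \<in> E \<Longrightarrow> a \<noteq> b \<and> a \<in> V \<and> b \<in> V"
    using assms(1) unfolding simple_graph_def by (metis doubleton_eq_iff insert_absorb2 singleton_insert_inj_eq')
  have col: "\<And>x. x \<in> V \<Longrightarrow> \<phi> x \<in> L x" and propc: "\<And>a b. {a,b} \<in> E \<Longrightarrow> \<phi> a \<noteq> \<phi> b"
    using assms(5) by (auto simp: frugal_L_coloring_def L_coloring_def)
  have frug: "\<And>x i. x \<in> V \<Longrightarrow> i \<in> L x \<Longrightarrow> card {u\<in>V. {u, x} \<in> E \<and> \<phi> u = i} \<le> 1"
    using assms(5) by (auto simp: frugal_L_coloring_def)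
  have Lsub: "\<And>x. x \<in> V \<Longrightarrow> L x \<subseteq> {1..k}" using assms(2) by (simp add: list_assignment_def)
  have card2: "\<And>x. x \<in> V \<Longrightarrow> card (L x) \<ge> 2"
  proof -
    fix x assume x: "x \<in> V"
    have "finite (L x)" using Lsub[OF x] finite_subset by blast
    moreover have "L x \<noteq> {}" using col[OF x] by blast
    ultimately have "card (L x) \<noteq> 0" by simp
    with assms(3) x show "card (L x) \<ge> 2" by fastforce
  qed
  have inj: "inj_on \<phi> (N_GL_closed V E L v)"
  proof (rule inj_onI)
    fix a b assume a: "a \<in> N_GL_closed V E L v" and b: "b \<in> N_GL_closed V E L v" and eq: "\<phi> a = \<phi> b"
    show "a = b"
    proof (rule ccontr)
      assume ne: "a \<noteq> b"
      consider "a = v" | "b = v" | "a \<in> N_GL V E L v" "b \<in> N_GL V E L v" "a \<noteq> v" "b \<noteq> v"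
        using a b unfolding N_GL_closed_def by blast
      then show False
      proof cases
        case 1 then have "{b, v} \<in> E" using b ne unfolding N_GL_closed_def N_GL_def by auto
        then show False using propc[of b v] eq 1 by auto
      next
        case 2 then have "{a, v} \<in> E" using a ne unfolding N_GL_closed_def N_GL_def by auto
        then show False using propc[of a v] eq 2 by auto
      next
        case 3
        have av: "a \<in> V" "{a,v} \<in> E" "L a \<inter> L v \<noteq> {}" using 3 by (auto simp: N_GL_def)
        have bv: "b \<in> V" "{b,v} \<in> E" "L b \<inter> L v \<noteq> {}" using 3 by (auto simp: N_GL_def)
        show False
        proof (cases "\<phi> a \<in> L v")
          case True
          have "{a,b} \<subseteq> {u\<in>V. {u, v} \<in> E \<and> \<phi> u = \<phi> a}" using av bv eq by auto
          moreover have "finite {u\<in>V. {u, v} \<in> E \<and> \<phi> u = \<phi> a}" using finV by simp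
          ultimately have "card {a,b} \<le> card {u\<in>V. {u, v} \<in> E \<and> \<phi> u = \<phi> a}" by (rule card_mono[rotated])
          hence "card {a,b} \<le> 1" using frug[OF v True] by linarith
          with ne show False by simp
        next
          case False
          have "{a,b} \<notin> E" using propc eq by blast
          moreover have "\<phi> a \<in> L a \<inter> L b" using col[OF av(1)] col[OF bv(1)] eq by simp
          moreover have "{v,b} \<in> E" using bv(2) by (simp add: insert_commute)
          moreover have "L v \<inter> L b \<noteq> {}" using bv(3) by blast
          moreover have "a \<noteq> v" "v \<noteq> b" using 3 by auto
          ultimately have "L_good_P3 V E L a v b"
            unfolding L_good_P3_def induced_P3_def
            using av bv v ne card2[OF av(1)] card2[OF bv(1)] card2[OF v] by blast
          then show False using assms(4) by blast
        qed
      qed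
    qed
  qed
  have vn: "v \<notin> N_GL V E L v" using edge[of v v] by (auto simp: N_GL_def)
  have finN: "finite (N_GL V E L v)" using finV by (simp add: N_GL_def)
  have "\<phi> ` N_GL_closed V E L v \<subseteq> {1..k}"
  proof
    fix c assume "c \<in> \<phi> ` N_GL_closed V E L v"
    then obtain x where x: "x \<in> N_GL_closed V E L v" "c = \<phi> x" by blast
    have "x \<in> V" using x(1) v unfolding N_GL_closed_def N_GL_def by blast
    then show "c \<in> {1..k}" using col Lsub x(2) by blast
  qed
  hence "card (\<phi> ` N_GL_closed V E L v) \<le> card {1..k}" by (rule card_mono[rotated]) simp
  hence "card (\<phi> ` N_GL_closed V E L v) \<le> k" by simp
  hence "card (N_GL_closed V E L v) \<le> k" using card_image[OF inj] by simp
  hence "card (N_GL V E L v) < k" using vn finN by (simp add: N_GL_closed_def)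
  with inj show "inj_on \<phi> (N_GL_closed V E L v) \<and> card (N_GL V E L v) < k" by blast
qed

end
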